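(* Let $n\ge5$ and let $f(x)=x^n+a_2x^{n-2}+a_3x^{n-3}+\dots+a_{n-1}x+a_n$ be a polynomial (with zero coefficient of $x^{n-1}$) all of whose roots are real. Then $$\Big(\frac{24}{n}(a_2^2-2a_4)\Big)^{1/4}\le\operatorname{spn}(f)\le 2\,(a_2^2-2a_4)^{1/4}.$$
   Context: If $x_1,\dots,x_n$ are the roots of $f$, the span of $f$ is $\operatorname{spn}(f)=\max_{i,j}|x_i-x_j|$. *)

theory Defs
  imports "HOL-Computational_Algebra.Polynomial" Complex_Main
begin

text \<open>Span of a real polynomial: the maximal distance between two of its (real) roots.
  Only used for polynomials all of whose roots are real.\<close>
definition spn :: "real poly \<Rightarrow> real" where
  "spn p = Max {\<bar>x - y\<bar> | x y. poly p x = 0 \<and> poly p y = 0}"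

end

theory Submission
  imports Defs "HOL-Computational_Algebra.Fundamental_Theorem_Algebra"
begin

fun E :: "real list \<Rightarrow> nat \<Rightarrow> real" where
  "E [] j = (if j = 0 then 1 else 0)"
| "E (y#ys) 0 = 1"
| "E (y#ys) (Suc j) = E ys (Suc j) + y * E ys j"

lemma E0[simp]: "E xs 0 = 1" by (cases xs) auto

definition ps :: "real list \<Rightarrow> nat \<Rightarrow> real" where
  "ps xs k = sum_list (map (\<lambda>x. x ^ k) xs)"

lemma ps_Cons[simp]: "ps (y#ys) k = y^k + ps ys k" by (simp add: ps_def)
lemma ps_Nil[simp]: "ps [] k = 0" by (simp add: ps_def)

lemma E_newton:
  "E xs 1 = ps xs 1 \<and> 2 * E xs 2 = ps xs 1 ^ 2 - ps xs 2
   \<and> 6 * E xs 3 = ps xs 1 ^ 3 - 3 * ps xs 1 * ps xs 2 + 2 * ps xs 3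
   \<and> 24 * E xs 4 = ps xs 1 ^ 4 - 6 * ps xs 1 ^ 2 * ps xs 2 + 3 * ps xs 2 ^ 2 + 8 * ps xs 1 * ps xs 3 - 6 * ps xs 4"
proof (induction xs)
  case Nil
  then show ?case by simp
next
  case (Cons y ys)
  have e: "E (y#ys) 1 = E ys 1 + y" "E (y#ys) 2 = E ys 2 + y * E ys 1"
       "E (y#ys) 3 = E ys 3 + y * E ys 2" "E (y#ys) 4 = E ys 4 + y * E ys 3"
    by (simp_all add: numeral_eq_Suc)
  define p1 where "p1 = ps ys 1"
  define p2 where "p2 = ps ys 2"
  define p3 where "p3 = ps ys 3"
  define p4 where "p4 = ps ys 4"
  have i: "E ys 1 = p1" "E ys 2 = (p1^2 - p2)/2" "E ys 3 = (p1 ^ 3 - 3 * p1 * p2 + 2 * p3)/6"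
    "E ys 4 = (p1 ^ 4 - 6 * p1 ^ 2 * p2 + 3 * p2 ^ 2 + 8 * p1 * p3 - 6 * p4)/24"
    using Cons.IH unfolding p1_def p2_def p3_def p4_def by auto
  show ?case unfolding e ps_Cons i p1_def[symmetric] p2_def[symmetric] p3_def[symmetric] p4_def[symmetric]
    by (simp add: field_simps power2_eq_square power3_eq_cube power4_eq_xxxx)
qed

lemma E_zero: "length xs < j \<Longrightarrow> E xs j = 0"
  by (induction xs arbitrary: j) (auto elim: less_natE simp: gr0_conv_Suc)

lemma coeff_prod_lin:
  "j \<le> length xs \<Longrightarrow> coeff (\<Prod>x\<leftarrow>xs. [:-x,1:]) (length xs - j) = (-1)^j * E xs j"
proof (induction xs arbitrary: j)
  case Nil
  then show ?case by simp
next
  case (Cons y ys)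
  define P where "P = (\<Prod>x\<leftarrow>ys. [:-x,1:])"
  have deg: "degree P \<le> length ys" unfolding P_def
    by (rule order.trans[OF degree_prod_list_le]) (induction ys, auto)
  have pr: "(\<Prod>x\<leftarrow>y#ys. [:-x,1:]) = smult (-y) P + pCons 0 P"
    by (simp add: P_def)
  show ?case
  proof (cases j)
    case 0
    have "coeff P (Suc (length ys)) = 0" using deg by (simp add: coeff_eq_0)
    moreover have "coeff P (length ys) = 1" using Cons.IH[of 0] by (simp add: P_def)
    ultimately show ?thesis using 0 unfolding pr by simp
  next
    case (Suc k)
    show ?thesis
    proof (cases "k < length ys")
      case True
      then have idx: "length (y#ys) - j = Suc (length ys - Suc k)" using Suc by simp
      have "length ys - k = Suc (length ys - Suc k)" using True by simp
      then show ?thesis using Cons.IH[of k] Cons.IH[of "Suc k"] True Suc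
        unfolding pr idx P_def[symmetric] by (auto simp: algebra_simps)
    next
      case False
      then have k: "k = length ys" using Cons.prems Suc by simp
      have "E ys (Suc k) = 0" using k by (simp add: E_zero)
      then show ?thesis using Cons.IH[of k] Suc k
        unfolding pr P_def[symmetric] by (simp add: algebra_simps)
    qed
  qed
qed

lemma poly_prod_lin: "poly (\<Prod>x\<leftarrow>ys. [:-x,1:]) t = (\<Prod>x\<leftarrow>ys. t - (x::real))"
  by (induction ys) (auto simp: algebra_simps)

lemma prod_list_upt_lt: "(\<Prod>i\<leftarrow>[0..<n]. g i) = (\<Prod>i<n. (g i :: real))"
  by (induction n) auto

lemma real_factor:
  fixes f :: "real poly"
  assumes "lead_coeff f = 1"
    and "\<forall>z. poly (map_poly complex_of_real f) z = 0 \<longrightarrow> z \<in> \<real>"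
  shows "\<exists>xs. length xs = degree f \<and> f = (\<Prod>x\<leftarrow>xs. [:-x,1:])"
proof -
  define fc where "fc = map_poly complex_of_real f"
  have dfc: "degree fc = degree f" unfolding fc_def by (rule degree_map_poly) simp
  have lfc: "lead_coeff fc = 1" using assms(1) dfc unfolding fc_def by (simp add: coeff_map_poly)
  obtain r where r: "smult (lead_coeff fc) (\<Prod>i<degree fc. [:-r i, 1:]) = fc"
    using complex_poly_decompose' by blast
  define n where "n = degree f"
  have fc: "fc = (\<Prod>i<n. [:-r i, 1:])" using r lfc dfc n_def by simp
  have real: "r i = of_real (Re (r i))" if "i < n" for i
  proof -
    have "poly fc (r i) = 0" unfolding fc poly_prod using that
      by (auto intro: prod_zero)
    then have "r i \<in> \<real>" using assms(2) fc_def by blast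
    then show ?thesis by (simp add: complex_is_Real_iff)
  qed
  define xs where "xs = map (\<lambda>i. Re (r i)) [0..<n]"
  have "poly f x = poly (\<Prod>x\<leftarrow>xs. [:-x,1:]) x" for x
  proof -
    have "complex_of_real (poly f x) = poly fc (of_real x)"
      unfolding fc_def by (induction f) (auto simp: map_poly_pCons)
    also have "\<dots> = (\<Prod>i<n. of_real x - r i)" unfolding fc poly_prod by simp
    also have "\<dots> = (\<Prod>i<n. complex_of_real (x - Re (r i)))"
      by (rule prod.cong) (use real in auto)
    also have "\<dots> = complex_of_real (\<Prod>i<n. (x - Re (r i)))" by simp
    also have "(\<Prod>i<n. (x - Re (r i))) = poly (\<Prod>x\<leftarrow>xs. [:-x,1:]) x"
      unfolding xs_def poly_prod_lin by (simp add: o_def prod_list_upt_lt)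
    finally show ?thesis by simp
  qed
  then have "f = (\<Prod>x\<leftarrow>xs. [:-x,1:])" using poly_eq_poly_eq_iff by blast
  moreover have "length xs = degree f" by (simp add: xs_def n_def)
  ultimately show ?thesis by blast
qed
lemma chord:
  fixes m M x :: real assumes "m \<le> x" "x \<le> M"
  shows "(M - m) * x^4 \<le> (M - x) * m^4 + (x - m) * M^4"
proof -
  have id: "(M - x) * m^4 + (x - m) * M^4 - (M - m) * x^4
     = (M - m) * (M - x) * (x - m) * (((2*x + m + M)^2 + (m+M)^2 + 2*m^2 + 2*M^2) / 4)"
    by (simp add: algebra_simps power2_eq_square power4_eq_xxxx)
  have "0 \<le> (M - m) * (M - x) * (x - m) * (((2*x + m + M)^2 + (m+M)^2 + 2*m^2 + 2*M^2) / 4)"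
    using assms by (intro mult_nonneg_nonneg) auto
  then show ?thesis using id by linarith
qed

lemma chord_sum:
  assumes "\<forall>x\<in>set xs. m \<le> x \<and> x \<le> M"
  shows "(M - m) * ps xs 4 \<le> real (length xs) * (M*m^4 - m*M^4) + (M^4 - m^4) * ps xs 1"
  using assms
proof (induction xs)
  case Nil then show ?case by simp
next
  case (Cons y ys)
  have "(M - m) * y^4 \<le> (M - y) * m^4 + (y - m) * M^4" using Cons.prems by (intro chord) auto
  with Cons show ?case by (simp add: algebra_simps)
qed

lemma sum_set_le: fixes g :: "real \<Rightarrow> real" assumes "\<And>x. 0 \<le> g x" shows "sum g (set xs) \<le> sum_list (map g (xs::real list))"
proof (induction xs)
  case Nil then show ?case by simp
next
  case (Cons a xs)
  have "sum g (set (a#xs)) \<le> g a + sum g (set xs)"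
    by (simp add: sum.insert_if assms)
  with Cons show ?case by simp
qed

lemma ps4_nonneg: "0 \<le> ps xs 4"
  unfolding ps_def by (induction xs) auto

lemma upper_ineq:
  fixes xs :: "real list" assumes "xs \<noteq> []"
  shows "(Max (set xs) - Min (set xs))^4 \<le> 8 * ps xs 4"
proof -
  define M where "M = Max (set xs)"
  define m where "m = Min (set xs)"
  have Mi: "M \<in> set xs" "m \<in> set xs" using assms by (simp_all add: M_def m_def)
  show ?thesis
  proof (cases "M = m")
    case True then show ?thesis using ps4_nonneg[of xs] by (simp add: M_def m_def)
  next
    case False
    have "sum (\<lambda>x. x^4) {M, m} \<le> sum (\<lambda>x. x^4) (set xs)"
      using Mi by (intro sum_mono2) auto
    also have "\<dots> \<le> ps xs 4" unfolding ps_def by (rule sum_set_le) simp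
    finally have s: "M^4 + m^4 \<le> ps xs 4" using False by simp
    have e: "8*(M^4+m^4) - (M-m)^4 = 4*(M^2-m^2)^2 + (M+m)^2 * (2*(M^2+m^2) + (M-m)^2)"
      by (simp add: algebra_simps power2_eq_square power4_eq_xxxx)
    have nn: "0 \<le> 4*(M^2-m^2)^2 + (M+m)^2 * (2*(M^2+m^2) + (M-m)^2)" by simp
    have "0 \<le> 8*(M^4+m^4) - (M-m)^4" by (subst e) (rule nn)
    then have "(M-m)^4 \<le> 8*(M^4+m^4)" by simp
    also have "\<dots> \<le> 8*ps xs 4" using s by simp
    finally have "(M-m)^4 \<le> 8*ps xs 4" .
    then show ?thesis by (simp add: M_def m_def)
  qed
qed

lemma lower_ineq:
  fixes xs :: "real list" assumes "xs \<noteq> []" "ps xs 1 = 0"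
  shows "12 * ps xs 4 \<le> real (length xs) * (Max (set xs) - Min (set xs))^4"
proof -
  define M where "M = Max (set xs)"
  define m where "m = Min (set xs)"
  have b: "\<forall>x\<in>set xs. m \<le> x \<and> x \<le> M" using assms by (simp add: M_def m_def)
  have c: "(M - m) * ps xs 4 \<le> real (length xs) * (M*m^4 - m*M^4)"
    using chord_sum[OF b] assms(2) by simp
  show ?thesis
  proof (cases "M = m")
    case True
    then have "\<forall>x\<in>set xs. x = M" using b by force
    then have "xs = replicate (length xs) M" by (simp add: replicate_length_same)
    then have "ps xs 1 = real (length xs) * M" by (metis ps_def sum_list_replicate map_replicate power_one_right of_nat_mult)
    then have "M = 0" using assms by simp
    then have "ps xs 4 = 0" using \<open>xs = replicate (length xs) M\<close> by (metis ps_def sum_list_replicate map_replicate mult_zero_right zero_power zero_less_numeral)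
    then show ?thesis by simp
  next
    case False
    obtain x where "x \<in> set xs" using assms(1) by (cases xs) auto
    then have pos: "M - m > 0" using b False by force
    have id: "12*(M*m^4 - m*M^4) = (M - m) * ((M-m)^4 - (M^2+4*M*m+m^2)^2)"
      by (simp add: algebra_simps power2_eq_square power4_eq_xxxx)
    have "(M - m) * (12 * ps xs 4) \<le> real (length xs) * (12*(M*m^4 - m*M^4))"
      using mult_left_mono[OF c, of 12] by (simp add: algebra_simps)
    also have "\<dots> \<le> real (length xs) * ((M - m) * (M-m)^4)"
      unfolding id using pos by (intro mult_left_mono) (auto simp: algebra_simps)
    finally have "(M - m) * (12 * ps xs 4) \<le> (M - m) * (real (length xs) * (M-m)^4)"
      by (simp add: algebra_simps)
    then show ?thesis using pos unfolding M_def m_def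
      by (simp add: mult_le_cancel_left_pos)
  qed
qed

lemma spn_eq:
  fixes xs :: "real list" assumes "xs \<noteq> []" "f = (\<Prod>x\<leftarrow>xs. [:-x,1:])"
  shows "spn f = Max (set xs) - Min (set xs)"
proof -
  have roots: "poly f x = 0 \<longleftrightarrow> x \<in> set xs" for x
    unfolding assms(2) poly_prod_lin by (induction xs) auto
  have S: "{\<bar>x - y\<bar> | x y. poly f x = 0 \<and> poly f y = 0} = (\<lambda>(x,y). \<bar>x - y\<bar>) ` (set xs \<times> set xs)"
    unfolding roots by auto
  show ?thesis unfolding spn_def S
  proof (rule Max_eqI)
    show "finite ((\<lambda>(x,y). \<bar>x - y\<bar>) ` (set xs \<times> set xs))" by simp
    show "z \<le> Max (set xs) - Min (set xs)" if zin: "z \<in> (\<lambda>(x,y). \<bar>x - y\<bar>) ` (set xs \<times> set xs)" for z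
    proof -
      obtain x y where "x \<in> set xs" "y \<in> set xs" "z = \<bar>x - y\<bar>" using zin by force
      moreover have b: "Min (set xs) \<le> x" "x \<le> Max (set xs)" "Min (set xs) \<le> y" "y \<le> Max (set xs)"
        using calculation by auto
      ultimately show ?thesis unfolding abs_le_iff by linarith
    qed
    have "Max (set xs) \<in> set xs" "Min (set xs) \<in> set xs" using assms(1) by auto
    moreover have "Min (set xs) \<le> Max (set xs)" using assms(1) by (meson List.finite_set Max_ge Min_le hd_in_set order_trans)
    ultimately show "Max (set xs) - Min (set xs) \<in> (\<lambda>(x,y). \<bar>x - y\<bar>) ` (set xs \<times> set xs)"
      by (intro image_eqI[of _ _ "(Max (set xs), Min (set xs))"]) auto
  qed
qed

theorem theorem4p1:
  fixes f :: "real poly" and n :: nat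
  assumes "n \<ge> 5"
    and "degree f = n" and "lead_coeff f = 1"
    and "coeff f (n - 1) = 0"
    and "\<forall>z. poly (map_poly complex_of_real f) z = 0 \<longrightarrow> z \<in> \<real>"
  shows "root 4 ((24 / real n) * ((coeff f (n - 2))\<^sup>2 - 2 * coeff f (n - 4))) \<le> spn f
       \<and> spn f \<le> 2 * root 4 ((coeff f (n - 2))\<^sup>2 - 2 * coeff f (n - 4))"
proof -
  obtain xs where len: "length xs = n" and fx: "f = (\<Prod>x\<leftarrow>xs. [:-x,1:])"
    using real_factor[OF assms(3,5)] assms(2) by blast
  have ne: "xs \<noteq> []" using len assms(1) by auto
  have c: "coeff f (n - j) = (-1)^j * E xs j" if "j \<le> n" for j
    using coeff_prod_lin[of j xs] that len fx by simp
  note nw = E_newton[of xs]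
  have p1: "ps xs 1 = 0" using c[of 1] assms(1,4) nw by simp
  have a2: "coeff f (n - 2) = E xs 2" using c[of 2] assms(1) by simp
  have a4: "coeff f (n - 4) = E xs 4" using c[of 4] assms(1) by simp
  have e2: "E xs 2 = - ps xs 2 / 2" using nw p1 by simp
  have e4: "E xs 4 = (3 * ps xs 2 ^ 2 - 6 * ps xs 4) / 24" using nw p1 by simp
  have A: "(coeff f (n - 2))\<^sup>2 - 2 * coeff f (n - 4) = ps xs 4 / 2"
    unfolding a2 a4 e2 e4 by (simp add: field_simps power2_eq_square)
  define d where "d = Max (set xs) - Min (set xs)"
  have sp: "spn f = d" using spn_eq[OF ne fx] d_def by simp
  have d0: "0 \<le> d" using ne unfolding d_def by (meson List.finite_set Max_ge Min_le hd_in_set order_trans diff_ge_0_iff_ge)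
  have up: "d^4 \<le> 8 * ps xs 4" using upper_ineq[OF ne] d_def by simp
  have lo: "12 * ps xs 4 \<le> real n * d^4" using lower_ineq[OF ne p1] d_def len by simp
  have n0: "real n > 0" using assms(1) by simp
  have "(24 / real n) * (ps xs 4 / 2) \<le> d^4"
    using lo n0 by (simp add: field_simps)
  then have "root 4 ((24 / real n) * (ps xs 4 / 2)) \<le> root 4 (d^4)" by simp
  also have "root 4 (d^4) = d" using d0 by (simp add: real_root_power_cancel)
  finally have L: "root 4 ((24 / real n) * (ps xs 4 / 2)) \<le> d" .
  have "d = root 4 (d^4)" using d0 by (simp add: real_root_power_cancel)
  also have "\<dots> \<le> root 4 (2^4 * (ps xs 4 / 2))" using up by simp
  also have "\<dots> = 2 * root 4 (ps xs 4 / 2)"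
    by (simp only: real_root_mult real_root_power_cancel)
  finally have U: "d \<le> 2 * root 4 (ps xs 4 / 2)" .
  show ?thesis unfolding A sp using L U by simp
qed

end
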